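(* If $H$ is a finite simple connected graph of order at least $4$, then the Cartesian product $K_3 \,\square\, H$ is not well-dominated.
   Context: A graph is well-dominated if every minimal (with respect to inclusion) dominating set is a minimum dominating set. The Cartesian product $G\,\square\, H$ has vertex set $V(G)\times V(H)$, with $(g_1,h_1)$ adjacent to $(g_2,h_2)$ iff either ($g_1=g_2$ and $h_1h_2\in E(H)$) or ($h_1=h_2$ and $g_1g_2\in E(G)$). *)

theory Defs
  imports Main
begin

type_synonym 'a graph = "'a set \<times> ('a \<Rightarrow> 'a \<Rightarrow> bool)"

definition verts :: "'a graph \<Rightarrow> 'a set" where "verts G = fst G"
definition adj :: "'a graph \<Rightarrow> 'a \<Rightarrow> 'a \<Rightarrow> bool" where "adj G = snd G"

definition finite_simple_graph :: "'a graph \<Rightarrow> bool" where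
  "finite_simple_graph G \<longleftrightarrow> finite (verts G)
     \<and> (\<forall>u v. adj G u v \<longrightarrow> u \<in> verts G \<and> v \<in> verts G)
     \<and> (\<forall>u v. adj G u v \<longrightarrow> adj G v u)
     \<and> (\<forall>v. \<not> adj G v v)"

definition connected_graph :: "'a graph \<Rightarrow> bool" where
  "connected_graph G \<longleftrightarrow> verts G \<noteq> {} \<and>
     (\<forall>u\<in>verts G. \<forall>v\<in>verts G. (adj G)\<^sup>*\<^sup>* u v)"

definition dominating_set :: "'a graph \<Rightarrow> 'a set \<Rightarrow> bool" where
  "dominating_set G D \<longleftrightarrow> D \<subseteq> verts G \<and>
     (\<forall>v\<in>verts G. v \<in> D \<or> (\<exists>u\<in>D. adj G u v))"

definition minimal_dominating_set :: "'a graph \<Rightarrow> 'a set \<Rightarrow> bool" where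
  "minimal_dominating_set G D \<longleftrightarrow> dominating_set G D \<and>
     (\<forall>D'. D' \<subset> D \<longrightarrow> \<not> dominating_set G D')"

definition minimum_dominating_set :: "'a graph \<Rightarrow> 'a set \<Rightarrow> bool" where
  "minimum_dominating_set G D \<longleftrightarrow> dominating_set G D \<and>
     (\<forall>D'. dominating_set G D' \<longrightarrow> card D \<le> card D')"

definition well_dominated :: "'a graph \<Rightarrow> bool" where
  "well_dominated G \<longleftrightarrow>
     (\<forall>D. minimal_dominating_set G D \<longrightarrow> minimum_dominating_set G D)"

definition cartesian_product :: "'a graph \<Rightarrow> 'b graph \<Rightarrow> ('a \<times> 'b) graph" where
  "cartesian_product G H =
     (verts G \<times> verts H,
      \<lambda>(g1, h1) (g2, h2). (g1 = g2 \<and> adj H h1 h2) \<or> (h1 = h2 \<and> adj G g1 g2))"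

definition K3 :: "nat graph" where
  "K3 = ({0, 1, 2}, \<lambda>u v. u \<in> {0, 1, 2} \<and> v \<in> {0, 1, 2} \<and> u \<noteq> v)"

end

theory Submission
  imports Defs
begin

abbreviation P where "P H \<equiv> cartesian_product K3 H"

lemma vertsP: "verts (P H) = {0,1,2} \<times> verts H"
  by (simp add: cartesian_product_def verts_def K3_def)

lemma adjP: "adj (P H) (i,h) (j,k) \<longleftrightarrow>
   (i = j \<and> adj H h k) \<or> (h = k \<and> i \<in> {0,1,2} \<and> j \<in> {0,1,2} \<and> i \<noteq> j)"
  by (simp add: cartesian_product_def adj_def K3_def)

lemma notwd:
  assumes "minimal_dominating_set G D1" "dominating_set G D2" "card D2 < card D1"
  shows "\<not> well_dominated G"
proof
  assume "well_dominated G"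
  then have "minimum_dominating_set G D1" using assms(1) unfolding well_dominated_def by blast
  then have "card D1 \<le> card D2" using assms(2) unfolding minimum_dominating_set_def by blast
  with assms(3) show False by simp
qed

lemma minimal_by_single:
  assumes "dominating_set G D" "\<And>x. x \<in> D \<Longrightarrow> \<not> dominating_set G (D - {x})"
  shows "minimal_dominating_set G D"
  unfolding minimal_dominating_set_def
proof (intro conjI allI impI assms(1))
  fix D' assume "D' \<subset> D"
  then obtain x where x: "x \<in> D" "x \<notin> D'" by blast
  show "\<not> dominating_set G D'"
  proof
    assume d: "dominating_set G D'"
    have sub: "D' \<subseteq> D - {x}" using \<open>D' \<subset> D\<close> x by blast
    have "D - {x} \<subseteq> verts G" using assms(1) unfolding dominating_set_def by blast
    moreover have "\<forall>v\<in>verts G. v \<in> D - {x} \<or> (\<exists>u\<in>D - {x}. adj G u v)"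
    proof
      fix v assume "v \<in> verts G"
      then have "v \<in> D' \<or> (\<exists>u\<in>D'. adj G u v)" using d unfolding dominating_set_def by blast
      then show "v \<in> D - {x} \<or> (\<exists>u\<in>D - {x}. adj G u v)" using sub by blast
    qed
    ultimately have "dominating_set G (D - {x})" unfolding dominating_set_def by blast
    with assms(2)[OF x(1)] show False by simp
  qed
qed

lemma crossing:
  assumes "connected_graph H" "finite_simple_graph H" "W \<subseteq> verts H" "W \<noteq> {}" "W \<noteq> verts H"
  shows "\<exists>u\<in>W. \<exists>x\<in>verts H - W. adj H u x"
proof -
  obtain w where w: "w \<in> W" using assms(4) by blast
  obtain y where y: "y \<in> verts H" "y \<notin> W" using assms(3,5) by blast
  have "(adj H)\<^sup>*\<^sup>* w y" using assms(1,3) w y unfolding connected_graph_def by blast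
  then have "y \<in> W \<or> (\<exists>u\<in>W. \<exists>x. x \<notin> W \<and> adj H u x)"
  proof (induction rule: rtranclp_induct)
    case base then show ?case using w by simp
  next
    case (step y z) then show ?case by blast
  qed
  then obtain u x where "u \<in> W" "x \<notin> W" "adj H u x" using y by blast
  moreover have "x \<in> verts H" using \<open>adj H u x\<close> assms(2) unfolding finite_simple_graph_def by blast
  ultimately show ?thesis by blast
qed

lemma row0_minimal:
  shows "minimal_dominating_set (P H) ((\<lambda>h. (0::nat,h)) ` verts H)"
proof (rule minimal_by_single)
  show "dominating_set (P H) ((\<lambda>h. (0::nat,h)) ` verts H)"
    unfolding dominating_set_def vertsP
  proof (intro conjI ballI)
    fix v assume "v \<in> {0::nat,1,2} \<times> verts H"
    then obtain i h where v: "v = (i,h)" "i \<in> {0,1,2}" "h \<in> verts H" by blast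
    show "v \<in> (\<lambda>h. (0::nat,h)) ` verts H \<or> (\<exists>u\<in>(\<lambda>h. (0::nat,h)) ` verts H. adj (P H) u v)"
    proof (cases "i = 0")
      case True then show ?thesis using v by blast
    next
      case False
      have "adj (P H) (0,h) v" using v False by (simp add: adjP)
      then show ?thesis using v by blast
    qed
  qed auto
next
  fix x assume "x \<in> (\<lambda>h. (0::nat,h)) ` verts H"
  then obtain h where x: "x = (0,h)" "h \<in> verts H" by blast
  show "\<not> dominating_set (P H) ((\<lambda>h. (0::nat,h)) ` verts H - {x})"
  proof
    assume "dominating_set (P H) ((\<lambda>h. (0::nat,h)) ` verts H - {x})"
    then have "(1,h) \<in> (\<lambda>h. (0::nat,h)) ` verts H - {x} \<or>
        (\<exists>u\<in>(\<lambda>h. (0::nat,h)) ` verts H - {x}. adj (P H) u (1,h))"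
      unfolding dominating_set_def vertsP using x by blast
    then show False using x by (auto simp: adjP)
  qed
qed

lemma card_row0: "finite (verts H) \<Longrightarrow> card ((\<lambda>h. (0::nat,h)) ` verts H) = card (verts H)"
  by (simp add: card_image inj_on_def)

lemma card_D2:
  assumes "finite V" "p \<in> V" "q \<in> V" "r \<in> V" "p \<noteq> q" "p \<noteq> r" "q \<noteq> r"
  shows "card ((\<lambda>h. (0::nat,h)) ` (V - {p,q,r}) \<union> {(1,y),(2,z)}) = card V - 1"
proof -
  have "card ((\<lambda>h. (0::nat,h)) ` (V - {p,q,r})) = card (V - {p,q,r})"
    by (simp add: card_image inj_on_def)
  also have "\<dots> = card V - 3" using assms by (simp add: card_Diff_subset)
  finally have c: "card ((\<lambda>h. (0::nat,h)) ` (V - {p,q,r})) = card V - 3" .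
  have "card V \<ge> 3"
  proof -
    have "{p,q,r} \<subseteq> V" using assms by auto
    then have "card {p,q,r} \<le> card V" by (rule card_mono[OF assms(1)])
    then show ?thesis using assms by simp
  qed
  moreover have "card ((\<lambda>h. (0::nat,h)) ` (V - {p,q,r}) \<union> {(1,y),(2,z)}) =
     card ((\<lambda>h. (0::nat,h)) ` (V - {p,q,r})) + card {(1::nat,y),(2,z)}"
    by (rule card_Un_disjoint) (use assms in auto)
  ultimately show ?thesis using c by simp
qed

lemma dom_pt: "u \<in> D \<Longrightarrow> adj G u w \<Longrightarrow> w \<in> D \<or> (\<exists>u\<in>D. adj G u w)"
  by blast

lemma fsg:
  assumes "finite_simple_graph H"
  shows "\<And>u w. adj H u w \<Longrightarrow> adj H w u" "\<And>u w. adj H u w \<Longrightarrow> u \<in> verts H"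
    "\<And>u w. adj H u w \<Longrightarrow> w \<in> verts H" "\<And>u. \<not> adj H u u" "finite (verts H)"
  using assms unfolding finite_simple_graph_def by blast+

lemma three_cases: "i \<in> {0::nat,1,2} \<Longrightarrow> (i = 0 \<Longrightarrow> Q) \<Longrightarrow> (i = 1 \<Longrightarrow> Q) \<Longrightarrow> (i = 2 \<Longrightarrow> Q) \<Longrightarrow> Q"
  by blast

lemma row0_dom:
  assumes "(0::nat,h) \<in> D" "h \<in> verts H" "i \<in> {0,1,2}"
  shows "(i,h) \<in> D \<or> (\<exists>u\<in>D. adj (P H) u (i,h))"
proof (cases "i = 0")
  case True then show ?thesis using assms by simp
next
  case False
  then have "adj (P H) (0,h) (i,h)" using assms by (simp add: adjP)
  then show ?thesis using assms(1) by (rule dom_pt[rotated])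
qed

lemma case_deg3:
  assumes fs: "finite_simple_graph H" and a: "adj H v x" "adj H v y" "adj H v z"
    "x \<noteq> y" "x \<noteq> z" "y \<noteq> z"
  shows "\<not> well_dominated (P H)"
proof -
  let ?V = "verts H"
  note F = fsg[OF fs]
  have vx: "v \<noteq> x" "v \<noteq> y" "v \<noteq> z" using a F(4) by metis+
  have V: "v \<in> ?V" "x \<in> ?V" "y \<in> ?V" "z \<in> ?V" using a F(2,3) by metis+
  let ?D = "(\<lambda>h. (0::nat,h)) ` (?V - {v,y,z}) \<union> {(1,y),(2,z)}"
  have c: "card ?D = card ?V - 1" using card_D2[OF F(5) V(1,3,4)] vx a by simp
  have d: "dominating_set (P H) ?D"
    unfolding dominating_set_def vertsP
  proof (intro conjI ballI)
    show "?D \<subseteq> {0,1,2} \<times> ?V" using V by auto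
    fix w assume "w \<in> {0::nat,1,2} \<times> ?V"
    then obtain i h where w: "w = (i,h)" "i \<in> {0,1,2}" "h \<in> ?V" by blast
    have in1: "(1,y) \<in> ?D" and in2: "(2,z) \<in> ?D" by auto
    have in0: "(0,x) \<in> ?D" by (rule UnI1, rule rev_image_eqI[of x]) (use V vx a in auto)
    show "w \<in> ?D \<or> (\<exists>u\<in>?D. adj (P H) u w)"
    proof (cases "h \<in> {v,y,z}")
      case False
      have "(0,h) \<in> ?D" by (rule UnI1, rule rev_image_eqI[of h]) (use w False in auto)
      then show ?thesis using w row0_dom by metis
    next
      case True
      then consider "h = v" | "h = y" | "h = z" by blast
      then show ?thesis
      proof cases
        case 1
        show ?thesis using w(2)
        proof (rule three_cases)
          assume "i = 0" then show ?thesis using w 1 by (intro dom_pt[OF in0]) (use a vx F(1) in \<open>simp add: adjP\<close>)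
        next
          assume "i = 1" then show ?thesis using w 1 by (intro dom_pt[OF in1]) (use a vx F(1) in \<open>simp add: adjP\<close>)
        next
          assume "i = 2" then show ?thesis using w 1 by (intro dom_pt[OF in2]) (use a vx F(1) in \<open>simp add: adjP\<close>)
        qed
      next
        case 2
        show ?thesis
        proof (cases "i = 1")
          case True then show ?thesis using w 2 in1 by simp
        next
          case False then show ?thesis using w 2 by (intro dom_pt[OF in1]) (simp add: adjP)
        qed
      next
        case 3
        show ?thesis
        proof (cases "i = 2")
          case True then show ?thesis using w 3 in2 by simp
        next
          case False then show ?thesis using w 3 by (intro dom_pt[OF in2]) (simp add: adjP)
        qed
      qed
    qed
  qed
  have "card ?V > 0" using V F(5) by (auto simp: card_gt_0_iff)
  then show ?thesis
    using notwd[OF row0_minimal d] c card_row0[OF F(5)] by simp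
qed

lemma case_P5:
  assumes fs: "finite_simple_graph H" and a: "adj H a b" "adj H b c" "adj H c d" "adj H d e"
    "b \<noteq> d" "a \<noteq> c" "a \<noteq> d" "e \<noteq> b" "e \<noteq> c"
  shows "\<not> well_dominated (P H)"
proof -
  let ?V = "verts H"
  note F = fsg[OF fs]
  have ne: "a \<noteq> b" "b \<noteq> c" "c \<noteq> d" "d \<noteq> e" using a F(4) by metis+
  have V: "a \<in> ?V" "b \<in> ?V" "c \<in> ?V" "d \<in> ?V" "e \<in> ?V" using a F(2,3) by metis+
  let ?D = "(\<lambda>h. (0::nat,h)) ` (?V - {b,c,d}) \<union> {(1,c),(2,c)}"
  have cD: "card ?D = card ?V - 1" using card_D2[OF F(5) V(2,3,4)] ne a by simp
  have dD: "dominating_set (P H) ?D"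
    unfolding dominating_set_def vertsP
  proof (intro conjI ballI)
    show "?D \<subseteq> {0,1,2} \<times> ?V" using V by auto
    fix w assume "w \<in> {0::nat,1,2} \<times> ?V"
    then obtain i h where w: "w = (i,h)" "i \<in> {0,1,2}" "h \<in> ?V" by blast
    have in1: "(1,c) \<in> ?D" and in2: "(2,c) \<in> ?D" by auto
    have in0: "(0,a) \<in> ?D" by (rule UnI1, rule rev_image_eqI[of a]) (use V ne a in auto)
    have in0': "(0,e) \<in> ?D" by (rule UnI1, rule rev_image_eqI[of e]) (use V ne a in auto)
    show "w \<in> ?D \<or> (\<exists>u\<in>?D. adj (P H) u w)"
    proof (cases "h \<in> {b,c,d}")
      case False
      have "(0,h) \<in> ?D" by (rule UnI1, rule rev_image_eqI[of h]) (use w False in auto)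
      then show ?thesis using w row0_dom by metis
    next
      case True
      then consider "h = b" | "h = c" | "h = d" by blast
      then show ?thesis
      proof cases
        case 1
        show ?thesis using w(2)
        proof (rule three_cases)
          assume "i = 0" then show ?thesis using w 1 by (intro dom_pt[OF in0]) (use a ne F(1) in \<open>simp add: adjP\<close>)
        next
          assume "i = 1" then show ?thesis using w 1 by (intro dom_pt[OF in1]) (use a ne F(1) in \<open>simp add: adjP\<close>)
        next
          assume "i = 2" then show ?thesis using w 1 by (intro dom_pt[OF in2]) (use a ne F(1) in \<open>simp add: adjP\<close>)
        qed
      next
        case 2
        show ?thesis using w(2)
        proof (rule three_cases)
          assume "i = 0" then show ?thesis using w 2 by (intro dom_pt[OF in1]) (simp add: adjP)
        next
          assume "i = 1" then show ?thesis using w 2 in1 by simp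
        next
          assume "i = 2" then show ?thesis using w 2 in2 by simp
        qed
      next
        case 3
        show ?thesis using w(2)
        proof (rule three_cases)
          assume "i = 0" then show ?thesis using w 3 by (intro dom_pt[OF in0']) (use a ne F(1) in \<open>simp add: adjP\<close>)
        next
          assume "i = 1" then show ?thesis using w 3 by (intro dom_pt[OF in1]) (use a ne F(1) in \<open>simp add: adjP\<close>)
        next
          assume "i = 2" then show ?thesis using w 3 by (intro dom_pt[OF in2]) (use a ne F(1) in \<open>simp add: adjP\<close>)
        qed
      qed
    qed
  qed
  have "card ?V > 0" using V F(5) by (auto simp: card_gt_0_iff)
  then show ?thesis
    using notwd[OF row0_minimal dD] cD card_row0[OF F(5)] by simp
qed

lemma case_P4:
  assumes fs: "finite_simple_graph H" and cn: "connected_graph H" and a: "adj H a b" "adj H b c" "adj H c d"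
    "a \<noteq> b" "a \<noteq> c" "a \<noteq> d" "b \<noteq> c" "b \<noteq> d" "c \<noteq> d"
    and VW: "verts H = {a,b,c,d}" and nac: "\<not> adj H a c" and nbd: "\<not> adj H b d"
  shows "\<not> well_dominated (P H)"
proof -
  note F = fsg[OF fs]
  let ?D = "{0::nat,1,2} \<times> {a,d}"
  have nca: "\<not> adj H c a" and ndb: "\<not> adj H d b" using nac nbd F(1) by metis+
  have cD: "card ?D = 6" using a by (simp add: card_cartesian_product)
  have cV: "card (verts H) = 4" using a VW by simp
  have mD: "minimal_dominating_set (P H) ?D"
  proof (rule minimal_by_single)
    show "dominating_set (P H) ?D"
      unfolding dominating_set_def vertsP
    proof (intro conjI ballI)
      show "?D \<subseteq> {0,1,2} \<times> verts H" using VW by auto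
      fix w assume "w \<in> {0::nat,1,2} \<times> verts H"
      then obtain i h where w: "w = (i,h)" "i \<in> {0,1,2}" "h \<in> {a,b,c,d}" using VW by blast
      show "w \<in> ?D \<or> (\<exists>u\<in>?D. adj (P H) u w)"
      proof -
        consider "h = a" | "h = b" | "h = c" | "h = d" using w by blast
        then show ?thesis
        proof cases
          case 2
          have "(i,a) \<in> ?D" using w(2) by blast
          moreover have "adj (P H) (i,a) w" using w 2 a by (simp add: adjP)
          ultimately show ?thesis by (rule dom_pt)
        next
          case 3
          have "(i,d) \<in> ?D" using w(2) by blast
          moreover have "adj (P H) (i,d) w" using w 3 a F(1) by (simp add: adjP)
          ultimately show ?thesis by (rule dom_pt)
        next
          case 1 then have "w \<in> ?D" using w(1,2) by blast
          then show ?thesis by (rule disjI1)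
        next
          case 4 then have "w \<in> ?D" using w(1,2) by blast
          then show ?thesis by (rule disjI1)
        qed
      qed
    qed
  next
    fix x assume x: "x \<in> ?D"
    then obtain i k where ik: "x = (i,k)" "i \<in> {0,1,2}" "k \<in> {a,d}" by blast
    show "\<not> dominating_set (P H) (?D - {x})"
    proof
      assume ds: "dominating_set (P H) (?D - {x})"
      show False
      proof (cases "k = a")
        case True
        have "(i,b) \<in> verts (P H)" unfolding vertsP using ik(2) VW by blast
        then have "(i,b) \<in> ?D - {x} \<or> (\<exists>u\<in>?D - {x}. adj (P H) u (i,b))"
          using ds unfolding dominating_set_def by blast
        then show False using ik True a ndb by (auto simp: adjP)
      next
        case False
        then have kd: "k = d" using ik by blast
        have "(i,c) \<in> verts (P H)" unfolding vertsP using ik(2) VW by blast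
        then have "(i,c) \<in> ?D - {x} \<or> (\<exists>u\<in>?D - {x}. adj (P H) u (i,c))"
          using ds unfolding dominating_set_def by blast
        then show False using ik kd a nac by (auto simp: adjP)
      qed
    qed
  qed
  have lt: "card ((\<lambda>h. (0::nat,h)) ` verts H) < card ?D"
    unfolding cD card_row0[OF F(5)] cV by simp
  show ?thesis
    by (rule notwd[OF mD row0_minimal[THEN minimal_dominating_set_def[THEN iffD1], THEN conjunct1] lt])
qed

lemma main4:
  assumes fs: "finite_simple_graph H" and cn: "connected_graph H" and a: "adj H a b" "adj H b c" "adj H c d"
    "a \<noteq> b" "a \<noteq> c" "a \<noteq> d" "b \<noteq> c" "b \<noteq> d" "c \<noteq> d"
  shows "\<not> well_dominated (P H)"
proof -
  note F = fsg[OF fs]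
  have sy: "adj H b a" "adj H c b" "adj H d c" using a F(1) by metis+
  show ?thesis
  proof (cases "adj H a c")
    case True
    then have "adj H c a" using F(1) by metis
    then show ?thesis using case_deg3[OF fs sy(2) a(3)] a by metis
  next
    case nac: False
    show ?thesis
    proof (cases "adj H b d")
      case True
      then show ?thesis using case_deg3[OF fs sy(1) a(2) True] a by metis
    next
      case nbd: False
      show ?thesis
      proof (cases "adj H d a")
        case True
        then show ?thesis using case_P5[OF fs a(1,2,3) True] a by metis
      next
        case False
        let ?W = "{a,b,c,d}"
        have Wsub: "?W \<subseteq> verts H" using a F(2,3) by blast
        show ?thesis
        proof (cases "?W = verts H")
          case True
          then show ?thesis using case_P4[OF fs cn a] nac nbd by metis
        next
          case False
          obtain u x where ux: "u \<in> ?W" "x \<in> verts H - ?W" "adj H u x"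
            using crossing[OF cn fs Wsub _ False] by blast
          consider "u = a" | "u = b" | "u = c" | "u = d" using ux by blast
          then show ?thesis
          proof cases
            case 1
            then have "adj H x a" using ux F(1) by metis
            then show ?thesis using case_P5[OF fs _ a(1,2,3)] a ux by blast
          next
            case 2
            then show ?thesis using case_deg3[OF fs sy(1) a(2)] ux a by blast
          next
            case 3
            then show ?thesis using case_deg3[OF fs sy(2) a(3)] ux a by blast
          next
            case 4
            then show ?thesis using case_P5[OF fs a(1,2,3)] ux a by blast
          qed
        qed
      qed
    qed
  qed
qed

theorem proposition23:
  fixes H :: "'a graph"
  assumes "finite_simple_graph H"
    and "connected_graph H"
    and "card (verts H) \<ge> 4"
  shows "\<not> well_dominated (cartesian_product K3 H)"
proof -
  note fs = assms(1) and cn = assms(2)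
  note F = fsg[OF fs]
  have ne4: "\<And>W. W \<subseteq> verts H \<Longrightarrow> card W < 4 \<Longrightarrow> W \<noteq> verts H" using assms(3) by auto
  obtain u where u: "u \<in> verts H" using cn unfolding connected_graph_def by blast
  obtain u' v where uv: "u' \<in> {u}" "v \<in> verts H - {u}" "adj H u' v"
    using crossing[OF cn fs _ _ ne4[of "{u}"]] u by auto
  have uv': "adj H u v" "u \<noteq> v" using uv by auto
  obtain y w where yw: "y \<in> {u,v}" "w \<in> verts H - {u,v}" "adj H y w"
    using crossing[OF cn fs _ _ ne4[of "{u,v}"]] u uv card_insert_le[of "{v}" u] by fastforce
  obtain p q r where pqr: "adj H p q" "adj H q r" "p \<noteq> q" "p \<noteq> r" "q \<noteq> r"
  proof (cases "y = u")
    case True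
    then show ?thesis using that[of v u w] yw uv' F(1) by blast
  next
    case False
    then show ?thesis using that[of u v w] yw uv' by blast
  qed
  have Wsub: "{p,q,r} \<subseteq> verts H" using pqr F(2,3) by blast
  have "card {p,q,r} < 4" using pqr by simp
  obtain z x where zx: "z \<in> {p,q,r}" "x \<in> verts H - {p,q,r}" "adj H z x"
    using crossing[OF cn fs Wsub _ ne4[OF Wsub \<open>card {p,q,r} < 4\<close>]] by blast
  consider "z = p" | "z = q" | "z = r" using zx by blast
  then show ?thesis
  proof cases
    case 1
    then have "adj H x p" using zx F(1) by metis
    then show ?thesis using main4[OF fs cn _ pqr(1,2)] zx pqr by blast
  next
    case 2
    have "adj H q p" using pqr F(1) by metis
    then show ?thesis using case_deg3[OF fs _ pqr(2)] zx 2 pqr by blast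
  next
    case 3
    then show ?thesis using main4[OF fs cn pqr(1,2)] zx pqr by blast
  qed
qed

end
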